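(* For every $s\ge1$, the power series $E_s(\mathbf{x})=\Psi_s(\mathbf{x};0)=\sum_{\mathbf{k}\in\mathbb{Z}_{\ge0}^s}V_{\mathbf{k}}\frac{\mathbf{x}^{\mathbf{k}}}{\mathbf{k}!}$, where $V_{\mathbf{k}}$ is the number of $0$-dimensional faces of $\Gamma_{\mathbf{k}}$, satisfies $$\Big(\frac{\partial^s}{\partial x_1\cdots\partial x_s}-\prod_{i=1}^{s-1}\Big(\frac{\partial}{\partial x_i}+\frac{\partial}{\partial x_{i+1}}\Big)\Big)E_s(\mathbf{x})=0.$$
   Context: Ladder diagrams: $Q^+$ is the directed graph on $\mathbb{Z}_{\ge0}^2$ with edges $((i,j),(i,j+1))$ and $((i,j),(i+1,j))$. For a sequence $\mathbf{k}=(k_1,\dots,k_s)$ of positive integers with sum $n$, let $n_0=0$, $n_i=\sum_{j\le i}k_j$, $T_{\mathbf{k}}=\{(n_\ell,n-n_\ell):0\le\ell\le s\}$, and $\Gamma_{\mathbf{k}}$ the induced subgraph of $Q^+$ on $\{(a,b):a\le c,b\le d\text{ for some }(c,d)\in T_{\mathbf{k}}\}$. For nonnegative sequences, $\Gamma_{\mathbf{k}}$ is $\Gamma$ of the subsequence of positive entries (single vertex $(0,0)$ if all entries are zero). A positive path is a shortest directed path from $(0,0)$ to a vertex of $T_{\mathbf{k}}$; a face of $\Gamma_{\mathbf{k}}$ is a subgraph containing all of $T_{\mathbf{k}}$ that is a union of positive paths; its dimension is $\operatorname{rank}H_1$ of it as a 1-dimensional CW complex. $F_{\mathbf{k}}(t)=\sum_\gamma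 t^{\dim\gamma}$ over faces, and $\Psi_s(\mathbf{x};t)=\sum_{\mathbf{k}\in\mathbb{Z}_{\ge0}^s}F_{\mathbf{k}}(t)\frac{\mathbf{x}^{\mathbf{k}}}{\mathbf{k}!}$ with $\mathbf{x}^{\mathbf{k}}=x_1^{k_1}\cdots x_s^{k_s}$, $\mathbf{k}!=k_1!\cdots k_s!$. Thus $V_{\mathbf{k}}=F_{\mathbf{k}}(0)$, which by Theorem 1.1 equals the number of vertices of the corresponding Gelfand–Cetlin polytope. *)

theory Defs
  imports Complex_Main
begin

type_synonym vert = "nat \<times> nat"

definition pos_part :: "nat list \<Rightarrow> nat list" where
  "pos_part k = filter (\<lambda>x. x > 0) k"

definition T_set :: "nat list \<Rightarrow> vert set" where
  "T_set k = {(sum_list (take l k), sum_list k - sum_list (take l k)) | l. l \<le> length k}"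

definition Qplus_edge :: "vert \<Rightarrow> vert \<Rightarrow> bool" where
  "Qplus_edge u v \<longleftrightarrow> (fst v = fst u \<and> snd v = Suc (snd u)) \<or> (fst v = Suc (fst u) \<and> snd v = snd u)"

definition T_of :: "nat list \<Rightarrow> vert set" where
  "T_of k = T_set (pos_part k)"

definition Gamma_V :: "nat list \<Rightarrow> vert set" where
  "Gamma_V k = {(a, b). \<exists>(c, d) \<in> T_of k. a \<le> c \<and> b \<le> d}"

definition Gamma_E :: "nat list \<Rightarrow> (vert \<times> vert) set" where
  "Gamma_E k = {(u, v). u \<in> Gamma_V k \<and> v \<in> Gamma_V k \<and> Qplus_edge u v}"

definition is_walk :: "vert set \<Rightarrow> (vert \<times> vert) set \<Rightarrow> vert \<Rightarrow> vert \<Rightarrow> vert list \<Rightarrow> bool" where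
  "is_walk V E u v p \<longleftrightarrow> p \<noteq> [] \<and> hd p = u \<and> last p = v \<and> set p \<subseteq> V \<and>
     (\<forall>i. Suc i < length p \<longrightarrow> (p ! i, p ! Suc i) \<in> E)"

definition path_edges :: "vert list \<Rightarrow> (vert \<times> vert) set" where
  "path_edges p = {(p ! i, p ! Suc i) | i. Suc i < length p}"

definition positive_path :: "nat list \<Rightarrow> vert list \<Rightarrow> bool" where
  "positive_path k p \<longleftrightarrow> (\<exists>v \<in> T_of k. is_walk (Gamma_V k) (Gamma_E k) (0, 0) v p \<and>
     (\<forall>q. is_walk (Gamma_V k) (Gamma_E k) (0, 0) v q \<longrightarrow> length p \<le> length q))"

definition faces :: "nat list \<Rightarrow> (vert set \<times> (vert \<times> vert) set) set" where
  "faces k = {(W, F). \<exists>P. P \<subseteq> {p. positive_path k p} \<and>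
      W = (\<Union>p\<in>P. set p) \<and> F = (\<Union>p\<in>P. path_edges p) \<and> T_of k \<subseteq> W}"

definition n_components :: "vert set \<Rightarrow> (vert \<times> vert) set \<Rightarrow> nat" where
  "n_components W F = card (W // Restr ((F \<union> F\<inverse>)\<^sup>*) W)"

text \<open>rank H_1 of a finite graph = |E| - |V| + #components.\<close>
definition face_dim :: "vert set \<times> (vert \<times> vert) set \<Rightarrow> nat" where
  "face_dim g = (card (snd g) + n_components (fst g) (snd g)) - card (fst g)"

definition V_count :: "nat list \<Rightarrow> nat" where
  "V_count k = card {g \<in> faces k. face_dim g = 0}"

text \<open>Formal power series in s variables x_1..x_s, represented by their coefficient
  functions on exponent vectors (lists of length s; coefficient 0 elsewhere).
  Variable x_{i+1} corresponds to list index i.\<close>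
type_synonym mps = "nat list \<Rightarrow> real"

definition pd :: "nat \<Rightarrow> mps \<Rightarrow> mps" where
  "pd i f = (\<lambda>k. real (Suc (k ! i)) * f (k[i := Suc (k ! i)]))"

definition mixed_op :: "nat \<Rightarrow> mps \<Rightarrow> mps" where
  "mixed_op s f = foldr pd [0..<s] f"

definition prod_op :: "nat \<Rightarrow> mps \<Rightarrow> mps" where
  "prod_op s f = foldr (\<lambda>i g. (\<lambda>k. pd i g k + pd (Suc i) g k)) [0..<s - 1] f"

definition E_series :: "nat \<Rightarrow> mps" where
  "E_series s = (\<lambda>k. if length k = s
       then real (V_count k) / real (prod_list (map fact k)) else 0)"

end

theory Submission
  imports Defs
begin


definition vs :: "vert \<Rightarrow> nat" where "vs v = fst v + snd v"

definition GV :: "vert set \<Rightarrow> vert set" where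
  "GV T = {(a, b). \<exists>(c, d) \<in> T. a \<le> c \<and> b \<le> d}"
definition GE :: "vert set \<Rightarrow> (vert \<times> vert) set" where
  "GE T = {(u, v). u \<in> GV T \<and> v \<in> GV T \<and> Qplus_edge u v}"
definition ppath :: "vert set \<Rightarrow> vert list \<Rightarrow> bool" where
  "ppath T p \<longleftrightarrow> (\<exists>v \<in> T. is_walk (GV T) (GE T) (0, 0) v p \<and>
     (\<forall>q. is_walk (GV T) (GE T) (0, 0) v q \<longrightarrow> length p \<le> length q))"
definition facesT :: "vert set \<Rightarrow> (vert set \<times> (vert \<times> vert) set) set" where
  "facesT T = {(W, F). \<exists>P. P \<subseteq> {p. ppath T p} \<and>
      W = (\<Union>p\<in>P. set p) \<and> F = (\<Union>p\<in>P. path_edges p) \<and> T \<subseteq> W}"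

lemma faces_eq: "faces k = facesT (T_of k)"
proof -
  have gv: "Gamma_V k = GV (T_of k)" unfolding Gamma_V_def GV_def by (rule refl)
  have ge: "Gamma_E k = GE (T_of k)" unfolding Gamma_E_def GE_def gv by (rule refl)
  have pp: "positive_path k = ppath (T_of k)"
    unfolding positive_path_def ppath_def gv ge by (rule refl)
  show ?thesis unfolding faces_def facesT_def pp by (rule refl)
qed

definition mp :: "vert list \<Rightarrow> bool" where
  "mp p \<longleftrightarrow> p \<noteq> [] \<and> hd p = (0,0) \<and> (\<forall>i. Suc i < length p \<longrightarrow> Qplus_edge (p!i) (p!Suc i))"

lemma qe_vs: "Qplus_edge u v \<Longrightarrow> vs v = Suc (vs u)"
  by (auto simp: Qplus_edge_def vs_def)

lemma qe_le: "Qplus_edge u v \<Longrightarrow> fst u \<le> fst v \<and> snd u \<le> snd v"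
  by (auto simp: Qplus_edge_def)

lemma mp_vs: "mp p \<Longrightarrow> i < length p \<Longrightarrow> vs (p!i) = i"
proof (induction i)
  case 0 then show ?case by (cases p) (auto simp: mp_def vs_def)
next
  case (Suc i)
  then have "vs (p!i) = i" "Qplus_edge (p!i) (p!Suc i)" by (auto simp: mp_def)
  then show ?case using qe_vs by simp
qed

lemma mp_le: "mp p \<Longrightarrow> i \<le> j \<Longrightarrow> j < length p \<Longrightarrow> fst (p!i) \<le> fst (p!j) \<and> snd (p!i) \<le> snd (p!j)"
proof (induction j)
  case 0 then show ?case by auto
next
  case (Suc j)
  show ?case
  proof (cases "i = Suc j")
    case False
    then have "i \<le> j" using Suc by auto
    with Suc have "fst (p!i) \<le> fst (p!j) \<and> snd (p!i) \<le> snd (p!j)" by auto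
    moreover have "Qplus_edge (p!j) (p!Suc j)" using Suc by (auto simp: mp_def)
    then have "fst (p!j) \<le> fst (p!Suc j) \<and> snd (p!j) \<le> snd (p!Suc j)" by (rule qe_le)
    ultimately show ?thesis by (meson le_trans)
  qed auto
qed

lemma mp_length: "mp p \<Longrightarrow> length p = Suc (vs (last p))"
  using mp_vs[of p "length p - 1"] by (auto simp: mp_def last_conv_nth)

lemma walk_mp: "is_walk V E (0,0) v p \<Longrightarrow> E \<subseteq> {(u,w). Qplus_edge u w} \<Longrightarrow> mp p"
  by (auto simp: is_walk_def mp_def)

lemma GE_sub: "GE T \<subseteq> {(u,w). Qplus_edge u w}" by (auto simp: GE_def)

lemma GV_iff: "x \<in> GV T \<longleftrightarrow> (\<exists>t\<in>T. fst x \<le> fst t \<and> snd x \<le> snd t)"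
  by (cases x) (force simp: GV_def)

lemma mp_in_GV: "mp p \<Longrightarrow> last p \<in> T \<Longrightarrow> set p \<subseteq> GV T"
proof
  fix x assume m: "mp p" and l: "last p \<in> T" and x: "x \<in> set p"
  then obtain i where i: "i < length p" "x = p!i" by (auto simp: in_set_conv_nth)
  have "last p = p!(length p - 1)" using m by (simp add: mp_def last_conv_nth)
  moreover have "fst (p!i) \<le> fst (p!(length p - 1)) \<and> snd (p!i) \<le> snd (p!(length p - 1))"
    using mp_le[OF m, of i "length p - 1"] i by auto
  ultimately have "fst x \<le> fst (last p) \<and> snd x \<le> snd (last p)" using i by simp
  then show "x \<in> GV T" using l unfolding GV_iff by blast
qed

lemma ppath_iff: "ppath T p \<longleftrightarrow> mp p \<and> last p \<in> T"
proof
  assume "ppath T p"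
  then obtain v where "v \<in> T" "is_walk (GV T) (GE T) (0,0) v p" by (auto simp: ppath_def)
  then show "mp p \<and> last p \<in> T" using walk_mp[OF _ GE_sub] by (auto simp: is_walk_def)
next
  assume a: "mp p \<and> last p \<in> T"
  then have sp: "set p \<subseteq> GV T" using mp_in_GV by auto
  have w: "is_walk (GV T) (GE T) (0,0) (last p) p"
    unfolding is_walk_def
  proof (intro conjI allI impI)
    fix i assume "Suc i < length p"
    then have "p!i \<in> set p" "p ! Suc i \<in> set p" by auto
    then show "(p ! i, p ! Suc i) \<in> GE T" using a sp \<open>Suc i < length p\<close> unfolding GE_def mp_def
      by auto
  qed (use a sp in \<open>simp_all add: mp_def\<close>)
  have "\<forall>q. is_walk (GV T) (GE T) (0, 0) (last p) q \<longrightarrow> length p \<le> length q"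
  proof (intro allI impI)
    fix q assume q: "is_walk (GV T) (GE T) (0, 0) (last p) q"
    then have "mp q" using walk_mp[OF _ GE_sub] by blast
    then show "length p \<le> length q" using mp_length a q by (auto simp: is_walk_def)
  qed
  then show "ppath T p" using w a unfolding ppath_def by blast
qed



lemma facesT_E:
  assumes "(W,F) \<in> facesT T"
  obtains P where "\<And>p. p \<in> P \<Longrightarrow> mp p \<and> last p \<in> T" "W = (\<Union>p\<in>P. set p)"
    "F = (\<Union>p\<in>P. path_edges p)" "T \<subseteq> W"
  using assms unfolding facesT_def ppath_iff by blast

lemma path_edges_mem: "(u,v) \<in> path_edges p \<Longrightarrow> \<exists>i. Suc i < length p \<and> u = p!i \<and> v = p!Suc i"
  by (auto simp: path_edges_def)

lemma mp_edge: "mp p \<Longrightarrow> (u,v) \<in> path_edges p \<Longrightarrow> Qplus_edge u v \<and> u \<in> set p \<and> v \<in> set p"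
  by (auto simp: path_edges_def mp_def)

lemma face_edge:
  assumes "(W,F) \<in> facesT T" "(u,v) \<in> F"
  shows "Qplus_edge u v \<and> u \<in> W \<and> v \<in> W"
proof -
  obtain P where P: "\<And>p. p \<in> P \<Longrightarrow> mp p \<and> last p \<in> T" "W = (\<Union>p\<in>P. set p)"
    "F = (\<Union>p\<in>P. path_edges p)" "T \<subseteq> W" using facesT_E[OF assms(1)] by blast
  then obtain p where "p \<in> P" "(u,v) \<in> path_edges p" using assms(2) by auto
  then show ?thesis using P mp_edge[of p u v] by auto
qed

lemma face_W_GV:
  assumes "(W,F) \<in> facesT T" shows "W \<subseteq> GV T"
proof -
  obtain P where P: "\<And>p. p \<in> P \<Longrightarrow> mp p \<and> last p \<in> T" "W = (\<Union>p\<in>P. set p)"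
    "F = (\<Union>p\<in>P. path_edges p)" "T \<subseteq> W" using facesT_E[OF assms(1)] by blast
  then show ?thesis using mp_in_GV by blast
qed

lemma mp_prefix_rtrancl:
  assumes "mp p" "i < length p"
  shows "((0,0), p!i) \<in> (path_edges p)\<^sup>*"
  using assms(2)
proof (induction i)
  case 0 then show ?case using assms(1) by (cases p) (auto simp: mp_def)
next
  case (Suc i)
  then have "(p!i, p!Suc i) \<in> path_edges p" by (auto simp: path_edges_def)
  with Suc show ?case by (meson Suc_lessD rtrancl.rtrancl_into_rtrancl)
qed

lemma face_conn:
  assumes "(W,F) \<in> facesT T" "w \<in> W"
  shows "((0,0), w) \<in> F\<^sup>*"
proof -
  obtain P where P: "\<And>p. p \<in> P \<Longrightarrow> mp p \<and> last p \<in> T" "W = (\<Union>p\<in>P. set p)"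
    "F = (\<Union>p\<in>P. path_edges p)" "T \<subseteq> W" using facesT_E[OF assms(1)] by blast
  then obtain p where p: "p \<in> P" "w \<in> set p" using assms(2) by auto
  then obtain i where i: "i < length p" "w = p!i" by (auto simp: in_set_conv_nth)
  have "((0,0), w) \<in> (path_edges p)\<^sup>*" using mp_prefix_rtrancl[of p i] P(1)[OF p(1)] i by simp
  moreover have "path_edges p \<subseteq> F" using P(3) p(1) by auto
  ultimately show ?thesis using rtrancl_mono by blast
qed

lemma face_in_edge:
  assumes "(W,F) \<in> facesT T" "v \<in> W" "v \<noteq> (0,0)"
  shows "\<exists>u. (u,v) \<in> F"
proof -
  obtain P where P: "\<And>p. p \<in> P \<Longrightarrow> mp p \<and> last p \<in> T" "W = (\<Union>p\<in>P. set p)"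
    "F = (\<Union>p\<in>P. path_edges p)" "T \<subseteq> W" using facesT_E[OF assms(1)] by blast
  then obtain p where p: "p \<in> P" "v \<in> set p" using assms(2) by auto
  then obtain i where i: "i < length p" "v = p!i" by (auto simp: in_set_conv_nth)
  have "p!0 = (0,0)" using P(1)[OF p(1)] by (cases p) (auto simp: mp_def)
  then have "i \<noteq> 0" using i assms(3) by (cases i) auto
  then obtain j where j: "i = Suc j" by (cases i) auto
  then have "(p!j, v) \<in> path_edges p" using i by (auto simp: path_edges_def)
  then have "(p!j, v) \<in> F" using P(3) p(1) by blast
  then show ?thesis by blast
qed

lemma face_origin:
  assumes "(W,F) \<in> facesT T" "T \<noteq> {}"
  shows "(0,0) \<in> W"
proof -
  obtain P where P: "\<And>p. p \<in> P \<Longrightarrow> mp p \<and> last p \<in> T" "W = (\<Union>p\<in>P. set p)"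
    "F = (\<Union>p\<in>P. path_edges p)" "T \<subseteq> W" using facesT_E[OF assms(1)] by blast
  then obtain w where "w \<in> W" using assms(2) by blast
  then obtain p where p: "p \<in> P" "w \<in> set p" using P by auto
  then have "p \<noteq> []" "hd p = (0,0)" using P(1)[OF p(1)] by (auto simp: mp_def)
  then have "hd p \<in> set p" "hd p = (0,0)" by (metis hd_in_set)+
  then show ?thesis using P(2) p(1) by auto
qed

lemma finite_GV: "finite T \<Longrightarrow> finite (GV T)"
proof -
  assume f: "finite T"
  have "GV T \<subseteq> (\<Union>t\<in>T. {..fst t} \<times> {..snd t})"
  proof
    fix v assume "v \<in> GV T"
    then obtain t where "t \<in> T" "fst v \<le> fst t" "snd v \<le> snd t" unfolding GV_iff by blast
    then show "v \<in> (\<Union>t\<in>T. {..fst t} \<times> {..snd t})" by (cases v) auto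
  qed
  moreover have "finite (\<Union>t\<in>T. {..fst t} \<times> {..snd t})" using f by auto
  ultimately show ?thesis by (rule finite_subset)
qed

definition indeg1 :: "(vert \<times> vert) set \<Rightarrow> bool" where
  "indeg1 F \<longleftrightarrow> (\<forall>u u' v. (u,v) \<in> F \<longrightarrow> (u',v) \<in> F \<longrightarrow> u = u')"

lemma ncomp_one:
  assumes "(W,F) \<in> facesT T" "T \<noteq> {}"
  shows "n_components W F = 1"
proof -
  let ?R = "Restr ((F \<union> F\<inverse>)\<^sup>*) W"
  have o: "(0,0) \<in> W" by (rule face_origin[OF assms])
  have rel: "(x,y) \<in> (F \<union> F\<inverse>)\<^sup>*" if "x \<in> W" "y \<in> W" for x y
  proof -
    have a: "((0,0), y) \<in> (F \<union> F\<inverse>)\<^sup>*" using face_conn[OF assms(1) that(2)] rtrancl_mono[of F "F \<union> F\<inverse>"] by blast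
    have "((0,0), x) \<in> F\<^sup>*" using face_conn[OF assms(1) that(1)] .
    then have "(x, (0,0)) \<in> (F\<inverse>)\<^sup>*" by (simp add: rtrancl_converse)
    then have b: "(x, (0,0)) \<in> (F \<union> F\<inverse>)\<^sup>*" using rtrancl_mono[of "F\<inverse>" "F \<union> F\<inverse>"] by blast
    show ?thesis using a b by (meson rtrancl_trans)
  qed
  have "W // ?R = {W}"
  proof -
    have "?R `` {x} = W" if "x \<in> W" for x
    proof (intro equalityI subsetI)
      fix y assume "y \<in> ?R `` {x}" then show "y \<in> W" by auto
    next
      fix y assume "y \<in> W" then show "y \<in> ?R `` {x}" using rel[OF that \<open>y \<in> W\<close>] that by blast
    qed
    then show ?thesis unfolding quotient_def using o by auto
  qed
  then show ?thesis unfolding n_components_def by simp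
qed

lemma dim0_iff:
  assumes "(W,F) \<in> facesT T" "T \<noteq> {}" "finite T"
  shows "face_dim (W,F) = 0 \<longleftrightarrow> indeg1 F"
proof -
  have fW: "finite W" using face_W_GV[OF assms(1)] finite_GV[OF assms(3)] finite_subset by blast
  have o: "(0,0) \<in> W" by (rule face_origin[OF assms(1,2)])
  define inn where "inn v = {u. (u,v) \<in> F}" for v
  have FW: "F \<subseteq> W \<times> W" using face_edge[OF assms(1)] by auto
  have fF: "finite F" using FW fW finite_subset by blast
  have fin: "finite (inn v)" for v
  proof -
    have "inn v \<subseteq> fst ` F" unfolding inn_def by force
    then show ?thesis using fF finite_subset by blast
  qed
  have ne: "inn v \<noteq> {}" if "v \<in> W - {(0,0)}" for v using face_in_edge[OF assms(1)] that unfolding inn_def by auto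
  have F_eq: "F = (\<lambda>(v,u). (u,v)) ` (SIGMA v:W - {(0,0)}. inn v)"
  proof
    show "F \<subseteq> (\<lambda>(v,u). (u,v)) ` (SIGMA v:W - {(0,0)}. inn v)"
    proof
      fix e assume e: "e \<in> F"
      obtain u v where uv: "e = (u,v)" by (cases e)
      then have "Qplus_edge u v" "v \<in> W" using face_edge[OF assms(1)] e by auto
      then have "v \<noteq> (0,0)" by (auto simp: Qplus_edge_def)
      then show "e \<in> (\<lambda>(v,u). (u,v)) ` (SIGMA v:W - {(0,0)}. inn v)"
        using uv e \<open>v \<in> W\<close> unfolding inn_def by (auto intro!: image_eqI[of _ _ "(v,u)"])
    qed
  next
    show "(\<lambda>(v,u). (u,v)) ` (SIGMA v:W - {(0,0)}. inn v) \<subseteq> F" unfolding inn_def by auto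
  qed
  have "card F = card (SIGMA v:W - {(0,0)}. inn v)"
    unfolding F_eq by (rule card_image) (auto simp: inj_on_def)
  also have "\<dots> = (\<Sum>v\<in>W - {(0,0)}. card (inn v))" using fW fin by simp
  finally have cF: "card F = (\<Sum>v\<in>W - {(0,0)}. card (inn v))" .
  have s1: "(\<Sum>v\<in>W - {(0,0)}. card (inn v)) = card (W - {(0,0)}) + (\<Sum>v\<in>W - {(0,0)}. card (inn v) - 1)"
  proof -
    have "(\<Sum>v\<in>W - {(0,0)}. card (inn v)) = (\<Sum>v\<in>W - {(0,0)}. 1 + (card (inn v) - 1))"
    proof (rule sum.cong)
      fix v assume "v \<in> W - {(0,0)}"
      then have "card (inn v) \<ge> 1" using ne fin by (simp add: Suc_leI card_gt_0_iff)
      then show "card (inn v) = 1 + (card (inn v) - 1)" by simp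
    qed simp
    also have "\<dots> = (\<Sum>v\<in>W - {(0,0)}. 1) + (\<Sum>v\<in>W - {(0,0)}. card (inn v) - 1)"
      by (rule sum.distrib)
    finally show ?thesis by simp
  qed
  have "card W > 0" using fW o card_gt_0_iff by blast
  then have cW: "card W = Suc (card (W - {(0,0)}))" using fW o by simp
  have "face_dim (W,F) = 0 \<longleftrightarrow> (\<Sum>v\<in>W - {(0,0)}. card (inn v) - 1) = 0"
    unfolding face_dim_def using ncomp_one[OF assms(1,2)] cF s1 cW by simp
  also have "\<dots> \<longleftrightarrow> (\<forall>v\<in>W - {(0,0)}. card (inn v) \<le> 1)" using fW by simp
  also have "\<dots> \<longleftrightarrow> indeg1 F"
  proof
    assume a: "\<forall>v\<in>W - {(0,0)}. card (inn v) \<le> 1"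
    show "indeg1 F" unfolding indeg1_def
    proof (intro allI impI)
      fix u u' v assume uv: "(u,v) \<in> F" "(u',v) \<in> F"
      have "Qplus_edge u v" "v \<in> W" using face_edge[OF assms(1) uv(1)] by auto
      then have "v \<in> W" "v \<noteq> (0,0)" by (auto simp: Qplus_edge_def)
      then have "card (inn v) \<le> Suc 0" using a by auto
      then have "\<forall>a\<in>inn v. \<forall>b\<in>inn v. a = b" using card_le_Suc0_iff_eq[OF fin[of v]] by blast
      moreover have "u \<in> inn v" "u' \<in> inn v" using uv unfolding inn_def by auto
      ultimately show "u = u'" by blast
    qed
  next
    assume "indeg1 F"
    then show "\<forall>v\<in>W - {(0,0)}. card (inn v) \<le> 1"
      using card_le_Suc0_iff_eq[OF fin] unfolding indeg1_def inn_def by auto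
  qed
  finally show ?thesis .
qed



definition tf :: "vert set \<Rightarrow> (vert set \<times> (vert \<times> vert) set) set" where
  "tf T = {g \<in> facesT T. indeg1 (snd g)}"
definition extf :: "vert set \<Rightarrow> (vert \<times> vert) set \<Rightarrow> vert set \<times> (vert \<times> vert) set \<Rightarrow> vert set \<times> (vert \<times> vert) set" where
  "extf T E0 g = (fst g \<union> T, snd g \<union> E0)"
definition truncf :: "vert set \<Rightarrow> vert set \<times> (vert \<times> vert) set \<Rightarrow> vert set \<times> (vert \<times> vert) set" where
  "truncf T g = (fst g - T, snd g - {e. snd e \<in> T})"

lemma mp_set_vs: "mp p \<Longrightarrow> u \<in> set p \<Longrightarrow> vs u < length p"
  by (auto simp: in_set_conv_nth mp_vs)

lemma mp_last_unique: "mp p \<Longrightarrow> u \<in> set p \<Longrightarrow> vs u = vs (last p) \<Longrightarrow> u = last p"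
proof -
  assume m: "mp p" and u: "u \<in> set p" and v: "vs u = vs (last p)"
  then obtain i where i: "i < length p" "u = p!i" by (auto simp: in_set_conv_nth)
  then have "i = vs (last p)" using mp_vs[OF m] v by simp
  then have "i = length p - 1" using mp_length[OF m] by simp
  then show ?thesis using i m by (simp add: mp_def last_conv_nth)
qed

lemma mp_vs_le: "mp p \<Longrightarrow> u \<in> set p \<Longrightarrow> vs u \<le> vs (last p)"
  using mp_set_vs mp_length by fastforce

lemma mp_snoc: assumes "mp p" "Qplus_edge (last p) t" shows "mp (p @ [t])"
  unfolding mp_def
proof (intro conjI allI impI)
  show "p @ [t] \<noteq> []" by simp
  show "hd (p @ [t]) = (0,0)" using assms(1) by (simp add: mp_def)
next
  fix i assume i: "Suc i < length (p @ [t])"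
  show "Qplus_edge ((p @ [t]) ! i) ((p @ [t]) ! Suc i)"
  proof (cases "Suc i < length p")
    case True then show ?thesis using assms(1) by (simp add: nth_append mp_def)
  next
    case False
    then have "i = length p - 1" "p \<noteq> []" using i assms(1) by (auto simp: mp_def)
    then show ?thesis using assms(2) by (simp add: nth_append last_conv_nth)
  qed
qed

lemma path_edges_snoc: "p \<noteq> [] \<Longrightarrow> path_edges (p @ [t]) = path_edges p \<union> {(last p, t)}"
proof -
  assume ne: "p \<noteq> []"
  show ?thesis
  proof (intro equalityI subsetI)
    fix e assume "e \<in> path_edges (p @ [t])"
    then obtain i where i: "Suc i < Suc (length p)" "e = ((p@[t])!i, (p@[t])!Suc i)"
      by (auto simp: path_edges_def)
    show "e \<in> path_edges p \<union> {(last p, t)}"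
    proof (cases "Suc i < length p")
      case True then show ?thesis using i by (auto simp: nth_append path_edges_def)
    next
      case False
      then have "i = length p - 1" using i by simp
      then show ?thesis using i ne by (simp add: nth_append last_conv_nth)
    qed
  next
    fix e assume "e \<in> path_edges p \<union> {(last p, t)}"
    then show "e \<in> path_edges (p @ [t])"
    proof
      assume "e \<in> path_edges p"
      then obtain i where i: "Suc i < length p" "e = (p!i, p!Suc i)" by (auto simp: path_edges_def)
      then have "e = ((p@[t])!i, (p@[t])!Suc i)" by (simp add: nth_append)
      then show ?thesis using i unfolding path_edges_def by fastforce
    next
      assume "e \<in> {(last p, t)}"
      then have "e = ((p@[t])!(length p - 1), (p@[t])!Suc (length p - 1))"
        using ne by (simp add: nth_append last_conv_nth)
      moreover have "Suc (length p - 1) < length (p@[t])" using ne by simp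
      ultimately show ?thesis unfolding path_edges_def by blast
    qed
  qed
qed

lemma path_edges_target: "(u,v) \<in> path_edges p \<Longrightarrow> v \<in> set p"
  by (auto simp: path_edges_def)

lemma tfD: "g \<in> tf T \<Longrightarrow> g \<in> facesT T \<and> indeg1 (snd g)" by (simp add: tf_def)

lemma claim1:
  assumes T: "T \<subseteq> {v. vs v = N}" and N: "N \<ge> 1"
    and E0: "E0 \<subseteq> {(u,t). t \<in> T \<and> Qplus_edge u t}" "\<forall>t\<in>T. \<exists>u. (u,t) \<in> E0" "indeg1 E0"
    and g: "g \<in> tf (Domain E0)"
  shows "extf T E0 g \<in> tf T \<and> truncf T (extf T E0 g) = g"
proof -
  obtain W' F' where gWF: "g = (W',F')" by (cases g)
  have gf: "(W',F') \<in> facesT (Domain E0)" "indeg1 F'" using tfD[OF g] gWF by auto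
  obtain P' where P': "\<And>p. p \<in> P' \<Longrightarrow> mp p \<and> last p \<in> Domain E0" "W' = (\<Union>p\<in>P'. set p)"
    "F' = (\<Union>p\<in>P'. path_edges p)" "Domain E0 \<subseteq> W'" using facesT_E[OF gf(1)] by blast
  have vsD: "vs u = N - 1" if uD: "u \<in> Domain E0" for u
  proof -
    obtain t where "(u,t) \<in> E0" using uD unfolding Domain_iff by blast
    then have "t \<in> T" "Qplus_edge u t" using E0(1) by auto
    then show ?thesis using qe_vs[of u t] T by auto
  qed
  have vsW: "vs w \<le> N - 1" if wW: "w \<in> W'" for w
  proof -
    obtain p where p: "p \<in> P'" "w \<in> set p" using wW P'(2) by auto
    then show ?thesis using mp_vs_le[of p w] P'(1)[OF p(1)] vsD by fastforce
  qed
  have WT: "W' \<inter> T = {}" using vsW T N by fastforce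
  have F'W: "(u,v) \<in> F' \<Longrightarrow> v \<in> W'" for u v using face_edge[OF gf(1)] by blast
  have lastu: "\<exists>p\<in>P'. last p = u" if uD: "u \<in> Domain E0" for u
  proof -
    obtain p where p: "p \<in> P'" "u \<in> set p" using uD P'(2,4) by blast
    have "u = last p" using mp_last_unique[of p u] P'(1)[OF p(1)] p(2) vsD uD by auto
    then show ?thesis using p by blast
  qed
  define P where "P = {p @ [t] | p t. p \<in> P' \<and> (last p, t) \<in> E0}"
  have Pm: "mp q \<and> last q \<in> T" if qP: "q \<in> P" for q
  proof -
    obtain p t where q: "q = p @ [t]" "p \<in> P'" "(last p, t) \<in> E0" using qP P_def by blast
    then show ?thesis using mp_snoc[of p t] P'(1)[OF q(2)] E0(1) by auto
  qed
  have Wset: "W' \<union> T = (\<Union>q\<in>P. set q)"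
  proof (intro equalityI subsetI)
    fix w assume "w \<in> W' \<union> T"
    then show "w \<in> (\<Union>q\<in>P. set q)"
    proof
      assume "w \<in> W'"
      then obtain p where p: "p \<in> P'" "w \<in> set p" using P'(2) by auto
      then obtain t where "(last p, t) \<in> E0" using P'(1) by blast
      then have "p @ [t] \<in> P" using p P_def by blast
      moreover have "w \<in> set (p @ [t])" using p by simp
      ultimately show ?thesis by blast
    next
      assume "w \<in> T"
      then obtain u where u: "(u,w) \<in> E0" using E0(2) by blast
      then obtain p where "p \<in> P'" "last p = u" using lastu by blast
      then have "p @ [w] \<in> P" using u P_def by blast
      moreover have "w \<in> set (p @ [w])" by simp
      ultimately show ?thesis by blast
    qed
  next
    fix w assume "w \<in> (\<Union>q\<in>P. set q)"
    then obtain p t where "p \<in> P'" "(last p, t) \<in> E0" "w \<in> set (p @ [t])" using P_def by blast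
    then show "w \<in> W' \<union> T" using P'(2) E0(1) by auto
  qed
  have Fset: "F' \<union> E0 = (\<Union>q\<in>P. path_edges q)"
  proof (intro equalityI subsetI)
    fix e assume "e \<in> F' \<union> E0"
    then show "e \<in> (\<Union>q\<in>P. path_edges q)"
    proof
      assume "e \<in> F'"
      then obtain p where p: "p \<in> P'" "e \<in> path_edges p" using P'(3) by auto
      then obtain t where "(last p, t) \<in> E0" using P'(1) by blast
      then have "p @ [t] \<in> P" using p P_def by blast
      moreover have "p \<noteq> []" using P'(1)[OF p(1)] by (simp add: mp_def)
      ultimately show ?thesis using p path_edges_snoc by blast
    next
      assume e: "e \<in> E0"
      then obtain u w where uw: "e = (u,w)" "(u,w) \<in> E0" by (cases e) auto
      then obtain p where p: "p \<in> P'" "last p = u" using lastu by blast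
      then have "p @ [w] \<in> P" using uw P_def by blast
      moreover have "p \<noteq> []" using P'(1)[OF p(1)] by (simp add: mp_def)
      ultimately show ?thesis using p uw path_edges_snoc by blast
    qed
  next
    fix e assume "e \<in> (\<Union>q\<in>P. path_edges q)"
    then obtain p t where p: "p \<in> P'" "(last p, t) \<in> E0" "e \<in> path_edges (p @ [t])" using P_def by blast
    moreover have "p \<noteq> []" using P'(1)[OF p(1)] by (simp add: mp_def)
    ultimately show "e \<in> F' \<union> E0" using P'(3) path_edges_snoc by auto
  qed
  have face: "(W' \<union> T, F' \<union> E0) \<in> facesT T"
    unfolding facesT_def ppath_iff using Pm Wset Fset by blast
  have ind: "indeg1 (F' \<union> E0)" unfolding indeg1_def
  proof (intro allI impI)
    fix u u' v assume a: "(u,v) \<in> F' \<union> E0" "(u',v) \<in> F' \<union> E0"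
    have notboth: False if "(x,v) \<in> F'" "(y,v) \<in> E0" for x y
      using that F'W E0(1) WT by blast
    show "u = u'" using a gf(2) E0(3) notboth unfolding indeg1_def by blast
  qed
  have ext: "extf T E0 g = (W' \<union> T, F' \<union> E0)" using gWF by (simp add: extf_def)
  have tr: "truncf T (W' \<union> T, F' \<union> E0) = (W', F')"
  proof -
    have "W' \<union> T - T = W'" using WT by blast
    moreover have "F' \<union> E0 - {e. snd e \<in> T} = F'"
    proof (intro equalityI subsetI)
      fix e assume e: "e \<in> F'"
      obtain u v where uv: "e = (u,v)" by (cases e)
      then have "v \<in> W'" using e F'W by blast
      then have "v \<notin> T" using WT by blast
      then show "e \<in> F' \<union> E0 - {e. snd e \<in> T}" using e uv by simp
    next
      fix e assume "e \<in> F' \<union> E0 - {e. snd e \<in> T}" then show "e \<in> F'" using E0(1) by auto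
    qed
    ultimately show ?thesis by (simp add: truncf_def)
  qed
  show ?thesis using face ind ext tr gWF by (simp add: tf_def)
qed



lemma butlast_facts:
  assumes m: "mp p" and T: "T \<subseteq> {v. vs v = N}" and N: "N \<ge> 1" and l: "last p \<in> T"
  shows "butlast p \<noteq> [] \<and> mp (butlast p) \<and> set (butlast p) = set p - T
     \<and> path_edges (butlast p) = path_edges p - {e. snd e \<in> T}
     \<and> (last (butlast p), last p) \<in> path_edges p"
proof -
  have len: "length p = Suc N" using mp_length[OF m] l T by auto
  have ne: "butlast p \<noteq> []" using len N by (cases p rule: rev_cases) auto
  have pe: "p = butlast p @ [last p]" using m by (simp add: mp_def)
  have mb: "mp (butlast p)" unfolding mp_def
  proof (intro conjI allI impI)
    show "butlast p \<noteq> []" by (rule ne)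
    show "hd (butlast p) = (0,0)" using m ne pe by (metis hd_append2 mp_def)
  next
    fix i assume "Suc i < length (butlast p)"
    then show "Qplus_edge (butlast p ! i) (butlast p ! Suc i)" using m by (simp add: nth_butlast mp_def)
  qed
  have vsb: "vs x < N" if x: "x \<in> set (butlast p)" for x
  proof -
    obtain i where i: "i < length (butlast p)" "x = butlast p ! i" using x by (auto simp: in_set_conv_nth)
    then have "x = p ! i" "i < length p" by (auto simp: nth_butlast)
    then have "vs x = i" using mp_vs[OF m] by simp
    then show ?thesis using i len by simp
  qed
  have disj: "set (butlast p) \<inter> T = {}" using vsb T by fastforce
  have sp: "set p = set (butlast p) \<union> {last p}" by (subst pe) simp
  have s: "set (butlast p) = set p - T" using sp disj l by blast
  have pe2: "path_edges p = path_edges (butlast p) \<union> {(last (butlast p), last p)}"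
    using path_edges_snoc[OF ne, of "last p"] pe by simp
  have "path_edges (butlast p) = path_edges p - {e. snd e \<in> T}"
  proof (intro equalityI subsetI)
    fix e assume e: "e \<in> path_edges (butlast p)"
    obtain u v where uv: "e = (u,v)" by (cases e)
    then have "v \<in> set (butlast p)" using e path_edges_target by blast
    then have "v \<notin> T" using disj by blast
    then show "e \<in> path_edges p - {e. snd e \<in> T}" using e uv pe2 by simp
  next
    fix e assume "e \<in> path_edges p - {e. snd e \<in> T}"
    then show "e \<in> path_edges (butlast p)" using pe2 l by auto
  qed
  then show ?thesis using ne mb s pe2 by simp
qed

lemma claim2:
  assumes T: "T \<subseteq> {v. vs v = N}" and N: "N \<ge> 1"
    and E0: "E0 \<subseteq> {(u,t). t \<in> T \<and> Qplus_edge u t}"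
    and g: "g \<in> tf T" and gE: "{e \<in> snd g. snd e \<in> T} = E0"
  shows "truncf T g \<in> tf (Domain E0) \<and> extf T E0 (truncf T g) = g"
proof -
  obtain W F where gWF: "g = (W,F)" by (cases g)
  have gf: "(W,F) \<in> facesT T" "indeg1 F" using tfD[OF g] gWF by auto
  obtain P where P: "\<And>p. p \<in> P \<Longrightarrow> mp p \<and> last p \<in> T" "W = (\<Union>p\<in>P. set p)"
    "F = (\<Union>p\<in>P. path_edges p)" "T \<subseteq> W" using facesT_E[OF gf(1)] by blast
  have gE': "{e \<in> F. snd e \<in> T} = E0" using gE gWF by simp
  have bf: "butlast p \<noteq> [] \<and> mp (butlast p) \<and> set (butlast p) = set p - T
     \<and> path_edges (butlast p) = path_edges p - {e. snd e \<in> T}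
     \<and> (last (butlast p), last p) \<in> path_edges p" if pP: "p \<in> P" for p
    using butlast_facts[of p T N] P(1)[OF pP] T N by blast
  define P' where "P' = butlast ` P"
  have P'm: "mp q \<and> last q \<in> Domain E0" if qP: "q \<in> P'" for q
  proof -
    obtain p where p: "p \<in> P" "q = butlast p" using qP P'_def by blast
    have "(last q, last p) \<in> F" using bf[OF p(1)] p P(3) by blast
    moreover have "last p \<in> T" using P(1)[OF p(1)] by blast
    ultimately have "(last q, last p) \<in> {e \<in> F. snd e \<in> T}" by simp
    then have "(last q, last p) \<in> E0" using gE' by simp
    then show ?thesis using bf[OF p(1)] p by blast
  qed
  have Wset: "W - T = (\<Union>q\<in>P'. set q)" unfolding P'_def using bf P(2) by auto
  have Fset: "F - {e. snd e \<in> T} = (\<Union>q\<in>P'. path_edges q)" unfolding P'_def using bf P(3) by auto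
  have DW: "Domain E0 \<subseteq> W - T"
  proof
    fix u assume "u \<in> Domain E0"
    then obtain t where ut: "(u,t) \<in> E0" unfolding Domain_iff by blast
    then have "(u,t) \<in> F" "t \<in> T" "Qplus_edge u t" using gE' E0 by auto
    then have "u \<in> W" "vs t = Suc (vs u)" "vs t = N" using face_edge[OF gf(1)] qe_vs T by auto
    then show "u \<in> W - T" using T by auto
  qed
  have face: "(W - T, F - {e. snd e \<in> T}) \<in> facesT (Domain E0)"
    unfolding facesT_def ppath_iff using P'm Wset Fset DW by blast
  have ind: "indeg1 (F - {e. snd e \<in> T})" using gf(2) unfolding indeg1_def by blast
  have tr: "truncf T g = (W - T, F - {e. snd e \<in> T})" using gWF by (simp add: truncf_def)
  have ex: "extf T E0 (W - T, F - {e. snd e \<in> T}) = (W, F)"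
  proof -
    have "W - T \<union> T = W" using P(4) by blast
    moreover have "F - {e. snd e \<in> T} \<union> E0 = F" using gE' by blast
    ultimately show ?thesis by (simp add: extf_def)
  qed
  show ?thesis using face ind tr ex gWF by (simp add: tf_def)
qed



definition incr :: "nat \<Rightarrow> nat list \<Rightarrow> nat list" where
  "incr j k = k[j := Suc (k ! j)]"

lemma length_fold_incr: "length (fold incr js k) = length k"
  by (induction js arbitrary: k) (auto simp: incr_def)

lemma sum_list_incr: "j < length xs \<Longrightarrow> sum_list (xs[j := Suc (xs!j)]) = Suc (sum_list xs)"
proof (induction xs arbitrary: j)
  case Nil then show ?case by simp
next
  case (Cons x xs) then show ?case by (cases j) auto
qed

lemma sum_take_incr:
  assumes "j < length k"
  shows "sum_list (take l (incr j k)) = sum_list (take l k) + (if j < l then 1 else 0)"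
proof (cases "j < l")
  case True
  have "take l (incr j k) = (take l k)[j := Suc (take l k ! j)]"
    unfolding incr_def take_update_swap using True by simp
  moreover have "j < length (take l k)" using True assms by simp
  moreover have "take l k ! j = k ! j" using True by simp
  ultimately show ?thesis using sum_list_incr[of j "take l k"] True by simp
next
  case False
  have "take l (incr j k) = (take l k)[j := Suc (k ! j)]"
    unfolding incr_def take_update_swap by simp
  also have "\<dots> = take l k" using False by (intro list_update_beyond) simp
  finally show ?thesis using False by simp
qed

lemma sum_take_fold_incr:
  "(\<forall>j\<in>set js. j < length k) \<Longrightarrow>
   sum_list (take l (fold incr js k)) = sum_list (take l k) + length (filter (\<lambda>j. j < l) js)"
proof (induction js arbitrary: k)
  case Nil then show ?case by simp
next
  case (Cons j js)
  have l: "length (incr j k) = length k" by (simp add: incr_def)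
  have "sum_list (take l (fold incr (j # js) k)) = sum_list (take l (fold incr js (incr j k)))" by simp
  also have "\<dots> = sum_list (take l (incr j k)) + length (filter (\<lambda>j. j < l) js)"
    using Cons.IH[of "incr j k"] Cons.prems l by simp
  also have "\<dots> = sum_list (take l k) + length (filter (\<lambda>j. j < l) (j # js))"
    using sum_take_incr[of j k l] Cons.prems by simp
  finally show ?case .
qed

definition Tall :: "nat list \<Rightarrow> vert set" where
  "Tall L = {(sum_list (take l L), sum_list L - sum_list (take l L)) | l. l \<le> length L}"

lemma Tall_Nil: "Tall [] = {(0,0)}" by (simp add: Tall_def)

lemma Tall_Cons: "Tall (x # L) = insert (0, x + sum_list L) ((\<lambda>(a,b). (a + x, b)) ` Tall L)"
proof (intro equalityI subsetI)
  fix v assume "v \<in> Tall (x # L)"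
  then obtain l where l: "l \<le> Suc (length L)" "v = (sum_list (take l (x#L)), sum_list (x#L) - sum_list (take l (x#L)))"
    by (auto simp: Tall_def)
  show "v \<in> insert (0, x + sum_list L) ((\<lambda>(a,b). (a + x, b)) ` Tall L)"
  proof (cases l)
    case 0 then show ?thesis using l by simp
  next
    case (Suc l')
    then have "v = (\<lambda>(a,b). (a + x, b)) (sum_list (take l' L), sum_list L - sum_list (take l' L))"
      using l by simp
    moreover have "(sum_list (take l' L), sum_list L - sum_list (take l' L)) \<in> Tall L"
      using l Suc unfolding Tall_def by auto
    ultimately show ?thesis by blast
  qed
next
  fix v assume v: "v \<in> insert (0, x + sum_list L) ((\<lambda>(a,b). (a + x, b)) ` Tall L)"
  show "v \<in> Tall (x # L)"
  proof (cases "v = (0, x + sum_list L)")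
    case True
    then have "v = (sum_list (take 0 (x#L)), sum_list (x#L) - sum_list (take 0 (x#L)))" by simp
    then show ?thesis unfolding Tall_def by blast
  next
    case False
    then obtain l where l: "l \<le> length L" "v = (sum_list (take l L) + x, sum_list L - sum_list (take l L))"
      using v unfolding Tall_def by auto
    then have "v = (sum_list (take (Suc l) (x#L)), sum_list (x#L) - sum_list (take (Suc l) (x#L)))" by simp
    moreover have "Suc l \<le> length (x#L)" using l by simp
    ultimately show ?thesis unfolding Tall_def by blast
  qed
qed

lemma Tall_filter: "Tall (filter (\<lambda>x. x > 0) L) = Tall L"
proof (induction L)
  case Nil then show ?case by simp
next
  case (Cons x L)
  show ?case
  proof (cases "x > 0")
    case True
    then have "sum_list (filter (\<lambda>x. x > 0) L) = sum_list L" by (induction L) auto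
    then show ?thesis using True Cons by (simp add: Tall_Cons)
  next
    case False
    then have x: "x = 0" by simp
    have "(0, sum_list L) \<in> Tall L" unfolding Tall_def by force
    then show ?thesis using x Cons by (simp add: Tall_Cons insert_absorb)
  qed
qed

lemma T_of_Tall: "T_of L = Tall L"
  unfolding T_of_def T_set_def pos_part_def using Tall_filter[of L] unfolding Tall_def by simp



locale cfg = fixes k :: "nat list" and s :: nat assumes len: "length k = s" and s1: "s \<ge> 1"
begin
definition "Pk l = sum_list (take l k)"
definition "K = fold incr [0..<s] k"
definition "N = sum_list K"
definition "X l = Pk l + l"
definition "t l = (X l, N - X l)"
definition "sel cs = map (\<lambda>i. if cs!i then Suc i else i) [0..<s-1]"
definition "Kc cs = fold incr (sel cs) k"
definition "lft cs l \<longleftrightarrow> l = s \<or> (0 < l \<and> l < s \<and> cs!(l-1))"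
definition "sh cs l = (if lft cs l then (X l - 1, N - X l) else (X l, N - X l - 1))"
definition "Ecs cs = (\<lambda>l. (sh cs l, t l)) ` {..s}"
definition "TT = t ` {..s}"
definition "CS = {cs::bool list. length cs = s - 1}"
definition "cs_of g = map (\<lambda>i. ((X (Suc i) - 1, N - X (Suc i)), t (Suc i)) \<in> snd g) [0..<s-1]"

lemma Pk_mono: "l \<le> l' \<Longrightarrow> Pk l \<le> Pk l'"
proof -
  assume "l \<le> l'"
  then have "take l' k = take l k @ take (l' - l) (drop l k)" using take_add[of l "l' - l" k] by simp
  then show ?thesis unfolding Pk_def by simp
qed

lemma lenK: "length K = s" unfolding K_def by (simp add: length_fold_incr len)

lemma cnt_upt: "l \<le> s \<Longrightarrow> length (filter (\<lambda>j. j < l) [0..<s]) = l"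
proof -
  assume l: "l \<le> s"
  have "{i. i < length [0..<s] \<and> [0..<s] ! i < l} = {..<l}" using l by auto
  then show ?thesis unfolding length_filter_conv_card by simp
qed

lemma sumK: "l \<le> s \<Longrightarrow> sum_list (take l K) = X l"
  unfolding K_def X_def Pk_def using sum_take_fold_incr[of "[0..<s]" k l] len cnt_upt by simp

lemma N_eq: "N = X s"
  using sumK[of s] lenK unfolding N_def by simp

lemma X_mono: "l < l' \<Longrightarrow> X l < X l'"
  using Pk_mono[of l l'] unfolding X_def by simp

lemma X_le_N: "l \<le> s \<Longrightarrow> X l \<le> N"
  using X_mono[of l s] N_eq by (cases "l = s") auto

lemma X0: "X 0 = 0" by (simp add: X_def Pk_def)

lemma X_ge: "X l \<ge> l" by (simp add: X_def)

lemma X_inj: "X l = X l' \<Longrightarrow> l = l'"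
  using X_mono[of l l'] X_mono[of l' l] by (cases "l < l'"; cases "l' < l") auto

lemma t_inj: "t l = t l' \<Longrightarrow> l = l'"
  unfolding t_def using X_inj by simp

lemma N_ge: "N \<ge> 1" using N_eq X_ge[of s] s1 by simp

lemma TT_eq: "T_of K = TT"
proof -
  have "T_of K = {(sum_list (take l K), sum_list K - sum_list (take l K)) | l. l \<le> s}"
    unfolding T_of_Tall Tall_def lenK by simp
  also have "\<dots> = {(X l, N - X l) | l. l \<le> s}" using sumK unfolding N_def by force
  also have "\<dots> = TT" unfolding TT_def t_def by auto
  finally show ?thesis .
qed

lemma TT_diag: "TT \<subseteq> {v. vs v = N}"
  unfolding TT_def t_def vs_def using X_le_N by auto

lemma TT_fin: "finite TT" unfolding TT_def by simp

lemma sel_len: "length (sel cs) = s - 1" by (simp add: sel_def)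

lemma sel_lt: "\<forall>j\<in>set (sel cs). j < s"
  unfolding sel_def using s1 by auto

lemma cnt_sel:
  assumes l: "l \<le> s"
  shows "length (filter (\<lambda>j. j < l) (sel cs)) = (if lft cs l then l - 1 else l)"
proof -
  let ?f = "\<lambda>i. if cs!i then Suc i else i"
  have "length (filter (\<lambda>j. j < l) (sel cs)) = card {i. i < s - 1 \<and> ?f i < l}"
    unfolding length_filter_conv_card sel_len by (simp add: sel_def cong: conj_cong)
  also have "\<dots> = (if lft cs l then l - 1 else l)"
  proof (cases "l = 0")
    case True
    then have "{i. i < s - 1 \<and> ?f i < l} = {}" by auto
    then show ?thesis using True by (simp add: lft_def)
  next
    case l0: False
    show ?thesis
    proof (cases "l = s")
      case True
      then have "{i. i < s - 1 \<and> ?f i < l} = {..<s-1}" by auto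
      then show ?thesis using True by (simp add: lft_def)
    next
      case ls: False
      show ?thesis
      proof (cases "cs!(l-1)")
        case True
        have "{i. i < s - 1 \<and> ?f i < l} = {..<l-1}"
        proof (intro equalityI subsetI)
          fix i assume "i \<in> {i. i < s - 1 \<and> ?f i < l}"
          then have "i < s - 1" "?f i < l" by auto
          then show "i \<in> {..<l-1}" using True by (cases "i = l - 1") (auto split: if_splits)
        next
          fix i assume "i \<in> {..<l-1}"
          then show "i \<in> {i. i < s - 1 \<and> ?f i < l}" using l ls by auto
        qed
        then show ?thesis using True l0 ls l by (simp add: lft_def)
      next
        case False
        have "{i. i < s - 1 \<and> ?f i < l} = {..<l}"
        proof (intro equalityI subsetI)
          fix i assume "i \<in> {i. i < s - 1 \<and> ?f i < l}"
          then show "i \<in> {..<l}" by (auto split: if_splits)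
        next
          fix i assume "i \<in> {..<l}"
          then show "i \<in> {i. i < s - 1 \<and> ?f i < l}" using l ls l0 False by (cases "i = l - 1") auto
        qed
        then show ?thesis using False l0 ls l by (simp add: lft_def)
      qed
    qed
  qed
  finally show ?thesis .
qed

lemma lenKc: "length (Kc cs) = s" unfolding Kc_def by (simp add: length_fold_incr len)

lemma lft_ge: "lft cs l \<Longrightarrow> l \<ge> 1" using s1 by (auto simp: lft_def)

lemma sumKc: assumes l: "l \<le> s" shows "sum_list (take l (Kc cs)) = (if lft cs l then X l - 1 else X l)"
proof -
  have "sum_list (take l (Kc cs)) = Pk l + length (filter (\<lambda>j. j < l) (sel cs))"
    using sum_take_fold_incr[of "sel cs" k l] len sel_lt unfolding Kc_def Pk_def by simp
  then show ?thesis using cnt_sel[OF l, of cs] lft_ge[of cs l] unfolding X_def by auto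
qed

lemma sumKc_all: "sum_list (Kc cs) = N - 1"
proof -
  have "sum_list (Kc cs) = sum_list (take s (Kc cs))" using lenKc[of cs] by simp
  also have "\<dots> = X s - 1" using sumKc[of s cs] by (simp add: lft_def)
  finally show ?thesis using N_eq by simp
qed

lemma Tc: "T_of (Kc cs) = sh cs ` {..s}"
proof -
  have "T_of (Kc cs) = {(sum_list (take l (Kc cs)), sum_list (Kc cs) - sum_list (take l (Kc cs))) | l. l \<le> s}"
    unfolding T_of_Tall Tall_def lenKc by simp
  also have "\<dots> = {sh cs l | l. l \<le> s}"
  proof -
    have "(sum_list (take l (Kc cs)), sum_list (Kc cs) - sum_list (take l (Kc cs))) = sh cs l" if "l \<le> s" for l
    proof (cases "lft cs l")
      case True
      then have "l \<ge> 1" by (rule lft_ge)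
      then have "X l \<ge> 1" using X_ge[of l] by simp
      then show ?thesis using True that sumKc sumKc_all X_le_N[OF that] s1 by (simp add: sh_def)
    next
      case False
      then show ?thesis using that sumKc sumKc_all by (simp add: sh_def)
    qed
    then show ?thesis by force
  qed
  also have "\<dots> = sh cs ` {..s}" by auto
  finally show ?thesis .
qed

lemma Dom_Ecs: "Domain (Ecs cs) = T_of (Kc cs)"
  unfolding Tc Ecs_def by force

end


lemma qe_pred: "Qplus_edge u (a,b) \<Longrightarrow> (a \<ge> 1 \<and> u = (a-1,b)) \<or> (b \<ge> 1 \<and> u = (a, b-1))"
  by (cases u) (auto simp: Qplus_edge_def)

lemma finite_tf: "finite T \<Longrightarrow> finite (tf T)"
proof -
  assume f: "finite T"
  have "tf T \<subseteq> Pow (GV T) \<times> Pow (GV T \<times> GV T)"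
  proof
    fix g assume g: "g \<in> tf T"
    obtain W F where gWF: "g = (W,F)" by (cases g)
    then have gf: "(W,F) \<in> facesT T" using g by (simp add: tf_def)
    have "W \<subseteq> GV T" using face_W_GV[OF gf] .
    moreover have "F \<subseteq> W \<times> W" using face_edge[OF gf] by auto
    ultimately show "g \<in> Pow (GV T) \<times> Pow (GV T \<times> GV T)" using gWF by auto
  qed
  moreover have "finite (Pow (GV T) \<times> Pow (GV T \<times> GV T))" using finite_GV[OF f] by simp
  ultimately show ?thesis by (rule finite_subset)
qed

lemma T_of_fin: "finite (T_of L)"
proof -
  have "T_of L = (\<lambda>l. (sum_list (take l L), sum_list L - sum_list (take l L))) ` {..length L}"
    unfolding T_of_Tall Tall_def by auto
  then show ?thesis by simp
qed

lemma T_of_ne: "T_of L \<noteq> {}"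
  unfolding T_of_Tall Tall_def by auto

lemma V_count_tf: "V_count L = card (tf (T_of L))"
proof -
  have "{g \<in> faces L. face_dim g = 0} = tf (T_of L)"
  proof (intro equalityI subsetI)
    fix g assume "g \<in> {g \<in> faces L. face_dim g = 0}"
    then show "g \<in> tf (T_of L)" using dim0_iff[of "fst g" "snd g" "T_of L"] T_of_fin T_of_ne
      unfolding faces_eq tf_def by auto
  next
    fix g assume "g \<in> tf (T_of L)"
    then show "g \<in> {g \<in> faces L. face_dim g = 0}" using dim0_iff[of "fst g" "snd g" "T_of L"] T_of_fin T_of_ne
      unfolding faces_eq tf_def by auto
  qed
  then show ?thesis unfolding V_count_def by simp
qed

context cfg
begin

lemma qe_sh: "l \<le> s \<Longrightarrow> Qplus_edge (sh cs l) (t l)"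
proof -
  assume l: "l \<le> s"
  show ?thesis
  proof (cases "lft cs l")
    case True
    then have "X l \<ge> 1" using lft_ge[OF True] X_ge[of l] by simp
    then show ?thesis using True by (simp add: sh_def t_def Qplus_edge_def)
  next
    case False
    then have "l < s" using l by (auto simp: lft_def)
    then have "X l < N" using X_mono N_eq by simp
    then show ?thesis using False by (simp add: sh_def t_def Qplus_edge_def)
  qed
qed

lemma Ecs_h1: "Ecs cs \<subseteq> {(u,v). v \<in> TT \<and> Qplus_edge u v}"
  unfolding Ecs_def TT_def using qe_sh by auto

lemma Ecs_h2: "\<forall>v\<in>TT. \<exists>u. (u,v) \<in> Ecs cs"
proof
  fix v assume "v \<in> TT"
  then obtain l where l: "l \<le> s" "v = t l" unfolding TT_def by auto
  then have "(sh cs l, v) \<in> Ecs cs" unfolding Ecs_def by auto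
  then show "\<exists>u. (u,v) \<in> Ecs cs" by blast
qed

lemma Ecs_h3: "indeg1 (Ecs cs)"
  unfolding indeg1_def
proof (intro allI impI)
  fix u u' v assume a: "(u,v) \<in> Ecs cs" "(u',v) \<in> Ecs cs"
  obtain l where l: "u = sh cs l" "v = t l" using a(1) unfolding Ecs_def by auto
  obtain l' where l': "u' = sh cs l'" "v = t l'" using a(2) unfolding Ecs_def by auto
  have "l = l'" using l l' t_inj by metis
  then show "u = u'" using l l' by simp
qed

lemma R2:
  assumes g: "g \<in> tf TT"
  shows "cs_of g \<in> CS \<and> {e \<in> snd g. snd e \<in> TT} = Ecs (cs_of g)"
proof -
  obtain W F where gWF: "g = (W,F)" by (cases g)
  have gf: "(W,F) \<in> facesT TT" "indeg1 F" using g gWF by (auto simp: tf_def)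
  have TW: "TT \<subseteq> W" using facesT_E[OF gf(1)] by blast
  let ?c = "cs_of g"
  have key: "(sh ?c l, t l) \<in> F" if l: "l \<le> s" for l
  proof -
    have tW: "t l \<in> W" using TW l unfolding TT_def by auto
    have "vs (t l) = N" using TT_diag l unfolding TT_def by auto
    then have "t l \<noteq> (0,0)" using N_ge by (auto simp: vs_def)
    then obtain u where u: "(u, t l) \<in> F" using face_in_edge[OF gf(1) tW] by blast
    then have "Qplus_edge u (t l)" using face_edge[OF gf(1)] by blast
    then have uc: "(X l \<ge> 1 \<and> u = (X l - 1, N - X l)) \<or> (N - X l \<ge> 1 \<and> u = (X l, N - X l - 1))"
      unfolding t_def using qe_pred by blast
    have uniq: "u' = u" if "(u', t l) \<in> F" for u' using gf(2) u that unfolding indeg1_def by blast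
    show ?thesis
    proof (cases "l = 0")
      case True
      then have "\<not> lft ?c l" using s1 by (simp add: lft_def)
      moreover have "u = (X l, N - X l - 1)" using uc True X0 by auto
      ultimately show ?thesis using u by (simp add: sh_def)
    next
      case l0: False
      show ?thesis
      proof (cases "l = s")
        case True
        then have "lft ?c l" by (simp add: lft_def)
        moreover have "u = (X l - 1, N - X l)" using uc True N_eq by auto
        ultimately show ?thesis using u by (simp add: sh_def)
      next
        case ls: False
        have lt: "l - 1 < s - 1" "Suc (l - 1) = l" using l l0 ls by auto
        have ci: "?c ! (l-1) = (((X l - 1, N - X l), t l) \<in> F)"
          using lt gWF unfolding cs_of_def by simp
        have lf: "lft ?c l = ?c ! (l-1)" using l l0 ls by (auto simp: lft_def)
        show ?thesis
        proof (cases "?c ! (l-1)")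
          case True
          then show ?thesis using ci lf by (simp add: sh_def)
        next
          case False
          then have "u \<noteq> (X l - 1, N - X l)" using ci u by auto
          then have "u = (X l, N - X l - 1)" using uc by auto
          then show ?thesis using u False lf by (simp add: sh_def)
        qed
      qed
    qed
  qed
  have "{e \<in> F. snd e \<in> TT} = Ecs ?c"
  proof (intro equalityI subsetI)
    fix e assume e: "e \<in> {e \<in> F. snd e \<in> TT}"
    obtain u v where uv: "e = (u,v)" by (cases e)
    then obtain l where l: "l \<le> s" "v = t l" using e unfolding TT_def by auto
    then have "(u, t l) \<in> F" "(sh ?c l, t l) \<in> F" using e uv key by auto
    then have "u = sh ?c l" using gf(2) unfolding indeg1_def by blast
    then show "e \<in> Ecs ?c" using uv l unfolding Ecs_def by auto
  next
    fix e assume "e \<in> Ecs ?c"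
    then obtain l where "l \<le> s" "e = (sh ?c l, t l)" unfolding Ecs_def by auto
    then show "e \<in> {e \<in> F. snd e \<in> TT}" using key unfolding TT_def by auto
  qed
  moreover have "?c \<in> CS" unfolding CS_def cs_of_def by simp
  ultimately show ?thesis using gWF by simp
qed

lemma R3:
  assumes cs: "cs \<in> CS" and g: "g \<in> tf (T_of (Kc cs))"
  shows "cs_of (extf TT (Ecs cs) g) = cs"
proof -
  have c1: "extf TT (Ecs cs) g \<in> tf TT \<and> truncf TT (extf TT (Ecs cs) g) = g"
    using claim1[OF TT_diag N_ge Ecs_h1 Ecs_h2 Ecs_h3] g Dom_Ecs by simp
  have noT: "(u,v) \<notin> snd g" if "v \<in> TT" for u v
  proof -
    have eq: "snd g = (snd g \<union> Ecs cs) - {e. snd e \<in> TT}"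
      using c1 unfolding truncf_def extf_def by (metis snd_conv)
    show ?thesis
    proof
      assume a: "(u,v) \<in> snd g"
      have "(u,v) \<in> (snd g \<union> Ecs cs) - {e. snd e \<in> TT}" by (subst eq[symmetric]) (rule a)
      then show False using that by simp
    qed
  qed
  have lc: "length cs = s - 1" using cs by (simp add: CS_def)
  show ?thesis
  proof (rule nth_equalityI)
    show "length (cs_of (extf TT (Ecs cs) g)) = length cs" using lc by (simp add: cs_of_def)
  next
    fix i assume "i < length (cs_of (extf TT (Ecs cs) g))"
    then have i: "i < s - 1" by (simp add: cs_of_def)
    let ?l = "Suc i"
    have tT: "t ?l \<in> TT" using i unfolding TT_def by auto
    have "cs_of (extf TT (Ecs cs) g) ! i = (((X ?l - 1, N - X ?l), t ?l) \<in> snd g \<union> Ecs cs)"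
      using i by (simp add: cs_of_def extf_def)
    also have "\<dots> = (((X ?l - 1, N - X ?l), t ?l) \<in> Ecs cs)" using noT[OF tT] by blast
    also have "\<dots> = ((X ?l - 1, N - X ?l) = sh cs ?l)"
    proof
      assume "((X ?l - 1, N - X ?l), t ?l) \<in> Ecs cs"
      then obtain l where "l \<le> s" "(X ?l - 1, N - X ?l) = sh cs l" "t ?l = t l" unfolding Ecs_def by auto
      then show "(X ?l - 1, N - X ?l) = sh cs ?l" using t_inj by metis
    next
      assume "(X ?l - 1, N - X ?l) = sh cs ?l"
      then show "((X ?l - 1, N - X ?l), t ?l) \<in> Ecs cs" using i unfolding Ecs_def by force
    qed
    also have "\<dots> = lft cs ?l"
    proof -
      have "X ?l \<ge> 1" using X_ge[of ?l] by simp
      then show ?thesis by (auto simp: sh_def)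
    qed
    also have "\<dots> = cs ! i" using i by (auto simp: lft_def)
    finally show "cs_of (extf TT (Ecs cs) g) ! i = cs ! i" .
  qed
qed

lemma main_count: "card (tf TT) = (\<Sum>cs\<in>CS. card (tf (T_of (Kc cs))))"
proof -
  define A where "A = (SIGMA cs:CS. tf (T_of (Kc cs)))"
  define f where "f g = (cs_of g, truncf TT g)" for g
  define f' where "f' = (\<lambda>(cs, g). extf TT (Ecs cs) g)"
  have b: "bij_betw f (tf TT) A"
  proof (rule bij_betw_byWitness[where f'=f'])
    show "\<forall>a\<in>tf TT. f' (f a) = a"
    proof
      fix g assume g: "g \<in> tf TT"
      have "{e \<in> snd g. snd e \<in> TT} = Ecs (cs_of g)" using R2[OF g] by blast
      then show "f' (f g) = g" using claim2[OF TT_diag N_ge Ecs_h1 g] unfolding f_def f'_def by simp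
    qed
    show "\<forall>a'\<in>A. f (f' a') = a'"
    proof
      fix a assume a: "a \<in> A"
      then obtain cs g where cg: "a = (cs, g)" "cs \<in> CS" "g \<in> tf (T_of (Kc cs))" unfolding A_def by auto
      have "truncf TT (extf TT (Ecs cs) g) = g"
        using claim1[OF TT_diag N_ge Ecs_h1 Ecs_h2 Ecs_h3] cg Dom_Ecs by simp
      then show "f (f' a) = a" using R3[OF cg(2,3)] cg unfolding f_def f'_def by simp
    qed
    show "f ` tf TT \<subseteq> A"
    proof
      fix x assume "x \<in> f ` tf TT"
      then obtain g where g: "g \<in> tf TT" "x = f g" by auto
      have "{e \<in> snd g. snd e \<in> TT} = Ecs (cs_of g)" "cs_of g \<in> CS" using R2[OF g(1)] by blast+
      then have "truncf TT g \<in> tf (T_of (Kc (cs_of g)))"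
        using claim2[OF TT_diag N_ge Ecs_h1 g(1)] Dom_Ecs by simp
      then show "x \<in> A" using g \<open>cs_of g \<in> CS\<close> unfolding A_def f_def by simp
    qed
    show "f' ` A \<subseteq> tf TT"
    proof
      fix x assume "x \<in> f' ` A"
      then obtain cs g where cg: "x = f' (cs, g)" "cs \<in> CS" "g \<in> tf (T_of (Kc cs))" unfolding A_def by auto
      then show "x \<in> tf TT"
        using claim1[OF TT_diag N_ge Ecs_h1 Ecs_h2 Ecs_h3] Dom_Ecs unfolding f'_def by simp
    qed
  qed
  have "card (tf TT) = card A" using bij_betw_same_card[OF b] .
  also have "\<dots> = (\<Sum>cs\<in>CS. card (tf (T_of (Kc cs))))" unfolding A_def
  proof (rule card_SigmaI)
    have "CS = {cs. set cs \<subseteq> UNIV \<and> length cs = s - 1}" unfolding CS_def by simp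
    then show "finite CS" using finite_lists_length_eq[of "UNIV :: bool set" "s - 1"] by simp
    show "\<forall>a\<in>CS. finite (tf (T_of (Kc a)))" using finite_tf T_of_fin by blast
  qed
  finally show ?thesis .
qed

lemma V_main: "V_count K = (\<Sum>cs\<in>CS. V_count (Kc cs))"
  using main_count V_count_tf TT_eq by simp

end


lemma prod_fact_incr: "j < length k \<Longrightarrow>
  prod_list (map fact (k[j := Suc (k!j)])) = Suc (k!j) * (prod_list (map fact k) :: nat)"
proof (induction k arbitrary: j)
  case Nil then show ?case by simp
next
  case (Cons x xs) then show ?case by (cases j) (auto simp: algebra_simps)
qed

lemma cancel_aux: "(a::real) \<noteq> 0 \<Longrightarrow> a * (v / (a * p)) = v / p"
  by (cases "p = 0") (simp_all add: field_simps)

lemma prod_fact_pos: "(prod_list (map fact k) :: nat) > 0"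
  by (induction k) auto

lemma foldr_pd_E:
  "\<forall>j\<in>set js. j < s \<Longrightarrow> foldr pd js (E_series s) k =
    (if length k = s then real (V_count (fold incr js k)) / real (prod_list (map fact k)) else 0)"
proof (induction js arbitrary: k)
  case Nil then show ?case by (simp add: E_series_def)
next
  case (Cons j js)
  have js: "\<forall>j\<in>set js. j < s" "j < s" using Cons.prems by auto
  have "foldr pd (j # js) (E_series s) k = real (Suc (k!j)) * foldr pd js (E_series s) (incr j k)"
    by (simp add: pd_def incr_def)
  also have "\<dots> = real (Suc (k!j)) * (if length k = s then real (V_count (fold incr js (incr j k))) / real (prod_list (map fact (incr j k))) else 0)"
    using Cons.IH[OF js(1), of "incr j k"] by (simp add: incr_def)
  also have "\<dots> = (if length k = s then real (V_count (fold incr (j # js) k)) / real (prod_list (map fact k)) else 0)"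
  proof (cases "length k = s")
    case True
    then have "prod_list (map fact (incr j k)) = Suc (k!j) * (prod_list (map fact k) :: nat)"
      using prod_fact_incr[of j k] js(2) by (simp add: incr_def)
    then have e: "real (prod_list (map fact (incr j k))) = real (Suc (k!j)) * real (prod_list (map fact k))"
      by (metis of_nat_mult)
    have pz: "real (prod_list (map fact k)) \<noteq> 0" using prod_fact_pos[of k] by simp
    have az: "real (Suc (k!j)) \<noteq> 0" by simp
    have "real (Suc (k!j)) * (real (V_count (fold incr js (incr j k))) / (real (Suc (k!j)) * real (prod_list (map fact k))))
        = real (V_count (fold incr js (incr j k))) / real (prod_list (map fact k))"
      by (rule cancel_aux[OF az])
    then show ?thesis using True e by simp
  qed simp
  finally show ?case .
qed

definition selz :: "nat list \<Rightarrow> bool list \<Rightarrow> nat list" where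
  "selz is cs = map (\<lambda>(i,c). if c then Suc i else i) (zip is cs)"

lemma pd_sum: "pd j (\<lambda>k. \<Sum>cs\<in>A. h cs k) k = (\<Sum>cs\<in>A. pd j (h cs) k)"
  by (simp add: pd_def sum_distrib_left)

lemma lists_Suc: "{cs :: bool list. length cs = Suc n} =
   (\<lambda>cs. True # cs) ` {cs. length cs = n} \<union> (\<lambda>cs. False # cs) ` {cs. length cs = n}"
proof (intro equalityI subsetI)
  fix cs :: "bool list" assume "cs \<in> {cs. length cs = Suc n}"
  then obtain c cs' where "cs = c # cs'" "length cs' = n" by (cases cs) auto
  then show "cs \<in> (\<lambda>cs. True # cs) ` {cs. length cs = n} \<union> (\<lambda>cs. False # cs) ` {cs. length cs = n}"
    by (cases c) auto
qed auto

lemma finite_lists_bool: "finite {cs :: bool list. length cs = n}"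
  using finite_lists_length_eq[of "UNIV :: bool set" n] by simp

lemma foldr_Op:
  "foldr (\<lambda>i g. (\<lambda>k. pd i g k + pd (Suc i) g k)) is f k =
   (\<Sum>cs\<in>{cs. length cs = length is}. foldr pd (selz is cs) f k)"
proof (induction "is" arbitrary: k)
  case Nil
  have "{cs :: bool list. length cs = 0} = {[]}" by auto
  then show ?case by (simp add: selz_def)
next
  case (Cons i "is")
  let ?A = "{cs :: bool list. length cs = length is}"
  let ?G = "foldr (\<lambda>i g. (\<lambda>k. pd i g k + pd (Suc i) g k)) is f"
  have G: "?G = (\<lambda>k. \<Sum>cs\<in>?A. foldr pd (selz is cs) f k)" using Cons.IH by (simp add: fun_eq_iff)
  have "foldr (\<lambda>i g. (\<lambda>k. pd i g k + pd (Suc i) g k)) (i # is) f k = pd i ?G k + pd (Suc i) ?G k" by simp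
  also have "\<dots> = (\<Sum>cs\<in>?A. foldr pd (i # selz is cs) f k) + (\<Sum>cs\<in>?A. foldr pd (Suc i # selz is cs) f k)"
    unfolding G pd_sum by simp
  also have "\<dots> = (\<Sum>cs\<in>(\<lambda>cs. False # cs) ` ?A. foldr pd (selz (i # is) cs) f k) +
                  (\<Sum>cs\<in>(\<lambda>cs. True # cs) ` ?A. foldr pd (selz (i # is) cs) f k)"
    by (simp add: sum.reindex selz_def)
  also have "\<dots> = (\<Sum>cs\<in>(\<lambda>cs. True # cs) ` ?A \<union> (\<lambda>cs. False # cs) ` ?A. foldr pd (selz (i # is) cs) f k)"
    by (subst sum.union_disjoint) (auto simp: finite_lists_bool)
  also have "\<dots> = (\<Sum>cs\<in>{cs. length cs = length (i # is)}. foldr pd (selz (i # is) cs) f k)"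
    using lists_Suc[of "length is"] by simp
  finally show ?case .
qed

lemma selz_sel: "length cs = s - 1 \<Longrightarrow> selz [0..<s-1] cs = map (\<lambda>i. if cs!i then Suc i else i) [0..<s-1]"
  by (rule nth_equalityI) (auto simp: selz_def)

theorem corollary1p3:
  fixes s :: nat
  assumes "s \<ge> 1"
  shows "\<forall>k. mixed_op s (E_series s) k - prod_op s (E_series s) k = 0"
proof
  fix k
  let ?CS = "{cs :: bool list. length cs = s - 1}"
  let ?P = "real (prod_list (map fact k))"
  have m: "mixed_op s (E_series s) k = (if length k = s then real (V_count (fold incr [0..<s] k)) / ?P else 0)"
    unfolding mixed_op_def by (rule foldr_pd_E) auto
  have "prod_op s (E_series s) k = (\<Sum>cs\<in>?CS. foldr pd (selz [0..<s-1] cs) (E_series s) k)"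
    unfolding prod_op_def foldr_Op by simp
  also have "\<dots> = (\<Sum>cs\<in>?CS. (if length k = s then real (V_count (fold incr (selz [0..<s-1] cs) k)) / ?P else 0))"
  proof (rule sum.cong)
    fix cs assume "cs \<in> ?CS"
    have "\<forall>j\<in>set (selz [0..<s-1] cs). j < s"
      unfolding selz_def using assms by (auto dest!: set_zip_leftD)
    then show "foldr pd (selz [0..<s-1] cs) (E_series s) k =
      (if length k = s then real (V_count (fold incr (selz [0..<s-1] cs) k)) / ?P else 0)"
      by (rule foldr_pd_E)
  qed simp
  finally have p: "prod_op s (E_series s) k = \<dots>" .
  show "mixed_op s (E_series s) k - prod_op s (E_series s) k = 0"
  proof (cases "length k = s")
    case True
    interpret c: cfg k s using True assms by unfold_locales auto
    have "V_count c.K = (\<Sum>cs\<in>c.CS. V_count (c.Kc cs))" by (rule c.V_main)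
    moreover have "c.Kc cs = fold incr (selz [0..<s-1] cs) k" if "cs \<in> ?CS" for cs
      using that selz_sel[of cs s] unfolding c.Kc_def c.sel_def by simp
    ultimately have "V_count (fold incr [0..<s] k) = (\<Sum>cs\<in>?CS. V_count (fold incr (selz [0..<s-1] cs) k))"
      unfolding c.K_def c.CS_def by simp
    then have "real (V_count (fold incr [0..<s] k)) / ?P = (\<Sum>cs\<in>?CS. real (V_count (fold incr (selz [0..<s-1] cs) k)) / ?P)"
      by (simp add: sum_divide_distrib)
    then show ?thesis using m p True by simp
  next
    case False
    then show ?thesis using m p by simp
  qed
qed


end
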